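(* For complex parameters $a,c$, \begin{align*} \sum_{n=0}^\infty \sum_{j=-n}^n (-1)^{j}\bigl(1-q^{2n+1}\bigr) q^{j^2-n}\frac{(q/a, q/c; q)_n}{(q a, q c; q)_n}(ac)^n =\frac{(1-a)(q; q )_\infty}{(1-ac/q)(qc; q )_\infty}\sum_{n=0}^\infty \frac{(q/c, -a; q)_n (-c)^n}{\bigl(q^2; q^2\bigr)_n (a; q)_n} q^{n(n-1)/2}. \end{align*}
   Context: Throughout, $q$ is a complex number with $0<|q|<1$. For $x\in\mathbb{C}$ and base $p\in\{q,q^2\}$, $(x;p)_\infty=\prod_{k=0}^\infty(1-xp^k)$ and, for an integer $n\ge 0$, $(x;p)_n=\prod_{k=0}^{n-1}(1-xp^k)$; also $(x_1,\dots,x_m;p)_n=(x_1;p)_n\cdots(x_m;p)_n$ for $n$ an integer or $\infty$. *)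

theory Defs
  imports "HOL-Analysis.Analysis"
begin

definition qpoch :: "complex \<Rightarrow> complex \<Rightarrow> nat \<Rightarrow> complex" where
  "qpoch x p n = (\<Prod>k<n. 1 - x * p ^ k)"

definition qpoch_inf :: "complex \<Rightarrow> complex \<Rightarrow> complex" where
  "qpoch_inf x p = (\<Prod>k. 1 - x * p ^ k)"

end

theory Submission
  imports Defs
begin

lemma qpoch_0 [simp]: "qpoch x p 0 = 1" by (simp add: qpoch_def)
lemma qpoch_Suc: "qpoch x p (Suc n) = qpoch x p n * (1 - x * p ^ n)"
  by (simp add: qpoch_def)
lemma qpoch_add: "qpoch x p (m + n) = qpoch x p m * qpoch (x * p ^ m) p n"
  by (induction n) (simp_all add: qpoch_Suc power_add mult.assoc mult_ac)
lemma qpoch_Suc': "qpoch x p (Suc n) = (1 - x) * qpoch (x * p) p n"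
  using qpoch_add[of x p 1 n] by (simp add: qpoch_def)

lemma qpoch_tendsto:
  fixes q x :: complex
  assumes "norm q < 1"
  shows "(\<lambda>n. qpoch x q n) \<longlonglongrightarrow> qpoch_inf x q"
proof -
  have s: "summable (\<lambda>k. norm ((1 - x * q ^ k) - 1))"
    using assms by (simp add: norm_mult norm_power summable_mult)
  have "convergent_prod (\<lambda>k. 1 - x * q ^ k)"
    by (rule abs_convergent_prod_imp_convergent_prod[OF summable_imp_abs_convergent_prod[OF s]])
  from convergent_prod_LIMSEQ[OF this]
  have "(\<lambda>n. \<Prod>k\<le>n. 1 - x * q ^ k) \<longlonglongrightarrow> qpoch_inf x q" by (simp add: qpoch_inf_def)
  then have "(\<lambda>n. qpoch x q (Suc n)) \<longlonglongrightarrow> qpoch_inf x q"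
    by (simp add: qpoch_def lessThan_Suc_atMost)
  then show ?thesis by (rule LIMSEQ_imp_Suc)
qed

lemma qpoch_inf_split:
  fixes q x :: complex
  assumes "norm q < 1"
  shows "qpoch_inf x q = qpoch x q m * qpoch_inf (x * q ^ m) q"
proof -
  have "(\<lambda>n. qpoch x q (n + m)) \<longlonglongrightarrow> qpoch_inf x q"
    using qpoch_tendsto[OF assms] by (rule LIMSEQ_ignore_initial_segment)
  moreover have "(\<lambda>n. qpoch x q (n + m)) = (\<lambda>n. qpoch x q m * qpoch (x * q ^ m) q n)"
    by (rule ext) (metis add.commute qpoch_add)
  moreover have "(\<lambda>n. qpoch x q m * qpoch (x * q ^ m) q n) \<longlonglongrightarrow> qpoch x q m * qpoch_inf (x * q ^ m) q"
    by (intro tendsto_mult tendsto_const qpoch_tendsto assms)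
  ultimately show ?thesis using LIMSEQ_unique by metis
qed

lemma qpoch_inf_nonzero:
  fixes q x :: complex
  assumes "norm q < 1" and "\<And>n. qpoch x q n \<noteq> 0"
  shows "qpoch_inf x q \<noteq> 0"
proof -
  have s: "summable (\<lambda>k. norm ((1 - x * q ^ k) - 1))"
    using assms by (simp add: norm_mult norm_power summable_mult)
  have "convergent_prod (\<lambda>k. 1 - x * q ^ k)"
    by (rule abs_convergent_prod_imp_convergent_prod[OF summable_imp_abs_convergent_prod[OF s]])
  moreover have "1 - x * q ^ k \<noteq> 0" for k
    using assms(2)[of "Suc k"] by (simp add: qpoch_Suc)
  ultimately show ?thesis unfolding qpoch_inf_def by (rule prodinf_nonzero)
qed

lemma qpoch_q_nonzero:
  fixes q :: complex
  assumes "norm q < 1"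
  shows "qpoch (q * q ^ m) q n \<noteq> 0"
proof -
  have "1 - q * q ^ m * q ^ k \<noteq> 0" for k
  proof
    assume "1 - q * q ^ m * q ^ k = 0"
    then have "q ^ (Suc (m + k)) = 1" by (simp add: power_add mult.assoc)
    then have "norm q ^ Suc (m + k) = 1" by (metis norm_one norm_power)
    moreover have "norm q ^ Suc (m + k) \<le> norm q ^ 1"
      using assms by (intro power_decreasing) auto
    moreover have "norm q ^ Suc (m + k) < 1" using assms calculation(2) by simp
    ultimately show False by simp
  qed
  then show ?thesis by (simp add: qpoch_def)
qed


fun tri :: "nat \<Rightarrow> nat" where
  "tri 0 = 0" | "tri (Suc n) = tri n + n"

lemma tri_add: "tri (m + n) = tri m + tri n + m * n"
  by (induction n) simp_all

lemma tri_div: "tri n = n * (n - 1) div 2"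
proof (induction n)
  case (Suc n)
  have "Suc n * (Suc n - 1) = n * (n - 1) + 2 * n" by (cases n) (simp_all add: algebra_simps)
  then show ?case using Suc by simp
qed simp

definition Pm :: "complex \<Rightarrow> complex \<Rightarrow> nat \<Rightarrow> complex" where
  "Pm q x n = (\<Prod>k<n. (x - q ^ Suc k))"

lemma Pm_0 [simp]: "Pm q x 0 = 1" by (simp add: Pm_def)
lemma Pm_Suc: "Pm q x (Suc n) = Pm q x n * (x - q ^ Suc n)" by (simp add: Pm_def)

definition V :: "complex \<Rightarrow> complex \<Rightarrow> nat \<Rightarrow> complex" where
  "V q a r = q ^ tri r * Pm q a r / qpoch a q r"

definition alph :: "complex \<Rightarrow> complex \<Rightarrow> nat \<Rightarrow> complex" where
  "alph q a r = (if r = 0 then 1 else 2) * V q a r"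

definition rq :: "complex \<Rightarrow> nat \<Rightarrow> complex" where
  "rq q k = 1 / qpoch q q k"

definition bet :: "complex \<Rightarrow> complex \<Rightarrow> nat \<Rightarrow> complex" where
  "bet q a n = (\<Sum>r\<le>n. alph q a r * rq q (n - r) * rq q (n + r))"

lemma one_minus_qpow_nz:
  fixes q :: complex assumes "norm q < 1" shows "1 - q ^ Suc k \<noteq> 0"
  using qpoch_q_nonzero[OF assms, of k 1] by (simp add: qpoch_def)

lemma rq_Suc:
  fixes q :: complex assumes "norm q < 1"
  shows "rq q (Suc k) = rq q k / (1 - q ^ Suc k)"
  by (simp add: rq_def qpoch_Suc mult.commute)

lemma V_Suc:
  assumes "qpoch a q (Suc r) \<noteq> 0"
  shows "V q a (Suc r) = V q a r * q ^ r * (a - q ^ Suc r) / (1 - a * q ^ r)"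
  using assms by (simp add: V_def qpoch_Suc Pm_Suc power_add field_simps)

context
  fixes q a :: complex
  assumes q1: "norm q < 1" and q0: "q \<noteq> 0" and an: "\<And>n. qpoch a q n \<noteq> 0"
begin

definition KK :: "nat \<Rightarrow> nat \<Rightarrow> complex" where
  "KK n r = (if r = 0 \<or> r > n + 1 then 0 else
      -2 * q ^ (n + 1 - r) * (1 - a * q ^ (r - 1)) * V q a r * rq q (n + 1 - r) * rq q (n + r))"

definition DD :: "nat \<Rightarrow> nat \<Rightarrow> complex" where
  "DD n r = (1 - q ^ (2 * n + 2)) * (1 - a * q ^ n) * (alph q a r * rq q (n + 1 - r) * rq q (n + 1 + r))
     - (if r \<le> n then (1 + a * q ^ n) * (alph q a r * rq q (n - r) * rq q (n + r)) else 0)"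

lemma DD_eq: assumes "r \<le> n + 1" shows "DD n r = KK n (Suc r) - KK n r"
proof -
  have aq: "1 - a * q ^ k \<noteq> 0" for k using an[of "Suc k"] by (simp add: qpoch_Suc)
  consider "r = 0" | "r = n + 1" | r' where "r = Suc r'" "r \<le> n" using assms
    by (cases r) force+
  then show ?thesis
  proof cases
    case 1
    define x where "x = q ^ n"
    define R where "R = rq q n"
    have e1: "rq q (Suc n) = R / (1 - q * x)" using rq_Suc[OF q1, of n] by (simp add: R_def x_def)
    have nz: "1 - q * x \<noteq> 0" using one_minus_qpow_nz[OF q1, of n] by (simp add: x_def)
    have V1: "V q a (Suc 0) = (a - q) / (1 - a)" by (simp add: V_def Pm_def qpoch_def)
    have V0: "V q a 0 = 1" by (simp add: V_def)
    have a1: "1 - a \<noteq> 0" using aq[of 0] by simp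
    have pw: "q ^ (2 * n + 2) = q^2 * x^2" by (simp add: x_def power_add power_mult_distrib power2_eq_square mult_2 power_mult)
    have pw2: "q ^ (2 * n) = x^2" by (simp add: x_def power_mult[symmetric] mult.commute)
    have "DD n 0 = (1 - q^2*x^2) * (1 - a*x) * ((R / (1 - q * x)) * (R / (1 - q * x))) - (1 + a * x) * (R * R)"
      by (simp add: DD_def alph_def V0 e1 pw2 power2_eq_square flip: x_def R_def)
    also have "\<dots> = -2 * x * (a - q) * R * (R / (1 - q * x))"
      using nz by (simp add: divide_simps) algebra
    also have "\<dots> = -2 * x * (1 - a) * ((a - q) / (1 - a)) * R * (R / (1 - q * x))"
      using a1 by simp
    also have "\<dots> = KK n (Suc 0) - KK n 0"
      by (simp add: KK_def V1 e1 flip: x_def R_def)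
    finally show ?thesis using 1 by simp
  next
    case 2
    define Y where "Y = rq q (Suc (n + n))"
    define W where "W = V q a (Suc n)"
    define z where "z = q * (q * q ^ (2 * n))"
    have e1: "rq q (Suc (Suc (n + n))) = Y / (1 - z)"
      using rq_Suc[OF q1, of "Suc (n+n)"] by (simp add: Y_def z_def mult_2)
    have nz: "1 - z \<noteq> 0" using one_minus_qpow_nz[OF q1, of "Suc (2*n)"] by (simp add: z_def)
    have r0: "rq q 0 = 1" by (simp add: rq_def)
    have "DD n r = (1 - z) * (1 - a * q ^ n) * (2 * W * (Y / (1 - z)))"
      using 2 by (simp add: DD_def alph_def e1 r0 flip: W_def z_def)
    also have "\<dots> = 2 * (1 - a * q ^ n) * W * Y" using nz by simp
    also have "\<dots> = KK n (Suc r) - KK n r"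
      using 2 by (simp add: KK_def r0 flip: W_def Y_def) (simp add: algebra_simps)
    finally show ?thesis .
  next
    case 3
    obtain p where np: "n = Suc r' + p" using 3 by (metis le_Suc_ex)
    define u where "u = q ^ r'"
    define v where "v = q ^ p"
    define X where "X = rq q p"
    define Y where "Y = rq q (n + r)"
    define W where "W = V q a r"
    have s: "rq q (Suc p) = X / (1 - q * v)" unfolding X_def v_def using rq_Suc[OF q1, of p] by simp
    have t: "rq q (Suc (n + r)) = Y / (1 - q^3 * u^2 * v)"
      unfolding Y_def using rq_Suc[OF q1, of "n + r"] 3 np
      by (simp add: u_def v_def power_add power_Suc power2_eq_square power3_eq_cube algebra_simps)
    have snz: "1 - q * v \<noteq> 0" using one_minus_qpow_nz[OF q1, of p] by (simp add: v_def)
    have tnz: "1 - q^3 * u^2 * v \<noteq> 0" using one_minus_qpow_nz[OF q1, of "n + r"] 3 np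
      by (simp add: u_def v_def power_add power_Suc power2_eq_square power3_eq_cube algebra_simps)
    have Vs: "V q a (Suc r) = W * (q * u) * (a - q^2 * u) / (1 - a * (q * u))"
      using V_Suc[OF an, of r] 3 by (simp add: W_def u_def power_Suc power2_eq_square)
    have anz: "1 - a * (q * u) \<noteq> 0" using aq[of r] 3 by (simp add: u_def)
    have id: "(1-q^4*u^2* v^2)*(1-a*q*u* v) - (1+a*q*u* v)*(1-q* v)*(1-q^3*u^2* v)
        = -q*u* v *(a-q^2*u)*(1-q* v) + q* v *(1-a*u)*(1-q^3*u^2* v)"
      by (simp add: algebra_simps power2_eq_square power3_eq_cube power4_eq_xxxx)
    have e: "n + 1 - r = Suc p" "n - r = p" "n + 1 + r = Suc (n + r)" "n + 1 - Suc r = p"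
         "n + Suc r = Suc (n + r)" "Suc r - 1 = r" "r - 1 = r'"
      using 3 np by auto
    have ex: "2 * n + 2 = 4 + r' * 2 + p * 2" using np by simp
    have pw0: "q ^ (2 * n + 2) = q^4*u^2* v^2"
      unfolding ex power_add power_mult u_def v_def by simp
    have pw: "q ^ (2 * n + 2) = q^4*u^2* v^2" using pw0 by simp
    have pw': "q ^ n = q*u* v" "q ^ Suc p = q * v" "q ^ p = v"
      "q ^ r = q * u" "q ^ r' = u"
      using 3 np by (simp_all add: u_def v_def power_add power_Suc power2_eq_square
          power4_eq_xxxx algebra_simps mult_2 power_mult_distrib)
    have c: "(r = 0 \<or> r > n+1) = False" "(Suc r = 0 \<or> Suc r > n+1) = False" "(r \<le> n) = True"
      "(r = 0) = False" "(Suc n < r) = False" using 3 by auto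
    show ?thesis
      using snz tnz anz
      unfolding DD_def KK_def alph_def c if_False if_True e s t Vs pw pw'
        W_def[symmetric] X_def[symmetric] Y_def[symmetric]
      apply (simp add: divide_simps c)
      apply (simp add: algebra_simps power2_eq_square power3_eq_cube power4_eq_xxxx)
      done
  qed
qed

lemma bet_rec: "(1 - q ^ (2 * n + 2)) * (1 - a * q ^ n) * bet q a (Suc n) = (1 + a * q ^ n) * bet q a n"
proof -
  have "(\<Sum>r<Suc (Suc n). DD n r) = (\<Sum>r<Suc (Suc n). KK n (Suc r) - KK n r)"
    by (intro sum.cong refl DD_eq) auto
  also have "\<dots> = 0" by (subst sum_lessThan_telescope) (simp add: KK_def)
  finally have z: "(\<Sum>r<Suc (Suc n). DD n r) = 0" .
  define f where "f r = alph q a r * rq q (n + 1 - r) * rq q (n + 1 + r)" for r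
  define g where "g r = alph q a r * rq q (n - r) * rq q (n + r)" for r
  have "(\<Sum>r<Suc (Suc n). DD n r) = (\<Sum>r<Suc (Suc n). (1 - q ^ (2 * n + 2)) * (1 - a * q ^ n) * f r)
      - (\<Sum>r<Suc (Suc n). (if r \<le> n then (1 + a * q ^ n) * g r else 0))"
    unfolding DD_def f_def g_def by (simp add: sum_subtractf)
  also have "(\<Sum>r<Suc (Suc n). (if r \<le> n then (1 + a * q ^ n) * g r else 0)) = (1 + a * q ^ n) * bet q a n"
    by (simp add: lessThan_Suc_atMost bet_def g_def sum_distrib_left)
  also have "(\<Sum>r<Suc (Suc n). (1 - q ^ (2 * n + 2)) * (1 - a * q ^ n) * f r)
      = (1 - q ^ (2 * n + 2)) * (1 - a * q ^ n) * bet q a (Suc n)"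
  proof -
    have "(\<Sum>r<Suc (Suc n). f r) = bet q a (Suc n)"
      unfolding bet_def f_def lessThan_Suc_atMost by simp
    then show ?thesis by (simp add: sum_distrib_left[symmetric])
  qed
  finally show ?thesis using z by simp
qed

lemma bet_closed: "bet q a n = qpoch (- a) q n / (qpoch (q^2) (q^2) n * qpoch a q n)"
proof (induction n)
  case 0
  then show ?case by (simp add: bet_def alph_def V_def rq_def)
next
  case (Suc n)
  have nz1: "1 - q ^ (2 * n + 2) \<noteq> 0" using one_minus_qpow_nz[OF q1, of "Suc (2*n)"] by simp
  have nz2: "1 - a * q ^ n \<noteq> 0" using an[of "Suc n"] by (simp add: qpoch_Suc)
  have nz3: "qpoch (q^2) (q^2) n \<noteq> 0"
  proof -
    have "1 - q^2 * (q^2)^k \<noteq> 0" for k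
      using one_minus_qpow_nz[OF q1, of "Suc (2*k)"] by (simp add: power_mult[symmetric] power_add[symmetric] mult.commute)
    then show ?thesis by (simp add: qpoch_def)
  qed
  have pq: "q^2 * (q^2)^n = q ^ (2 * n + 2)" by (simp add: power_mult[symmetric] power_add[symmetric] mult.commute)
  have "bet q a (Suc n) = (1 + a * q ^ n) * bet q a n / ((1 - q ^ (2 * n + 2)) * (1 - a * q ^ n))"
  proof -
    have nz: "(1 - q ^ (2 * n + 2)) * (1 - a * q ^ n) \<noteq> 0" using nz1 nz2 by simp
    show ?thesis by (subst nonzero_eq_divide_eq[OF nz]) (use bet_rec[of n] in \<open>simp add: mult.commute\<close>)
  qed
  also have "\<dots> = qpoch (- a) q (Suc n) / (qpoch (q^2) (q^2) (Suc n) * qpoch a q (Suc n))"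
    unfolding Suc qpoch_Suc pq using nz1 nz2 nz3 an[of n] by (simp add: field_simps)
  finally show ?case .
qed

end

lemma summable_tri:
  fixes \<rho> L :: real
  assumes "0 \<le> \<rho>" "\<rho> < 1" "0 \<le> L"
  shows "summable (\<lambda>m. real (Suc m) * \<rho> ^ tri m * L ^ m)"
proof -
  have "(\<lambda>m. 2 * L * \<rho> ^ m) \<longlonglongrightarrow> 2 * L * 0"
    by (intro tendsto_mult tendsto_const LIMSEQ_power_zero) (use assms in auto)
  then have "eventually (\<lambda>m. 2 * L * \<rho> ^ m < 1/2) sequentially"
    by (intro order_tendstoD(2)) auto
  then obtain N where N: "\<And>m. m \<ge> N \<Longrightarrow> 2 * L * \<rho> ^ m < 1/2"
    by (auto simp: eventually_sequentially)
  show ?thesis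
  proof (rule summable_ratio_test[of "1/2" N])
    fix m assume m: "m \<ge> N"
    have "norm (real (Suc (Suc m)) * \<rho> ^ tri (Suc m) * L ^ Suc m)
        = real (Suc (Suc m)) * \<rho> ^ tri m * L ^ m * (\<rho> ^ m * L)"
      using assms by (simp add: power_add abs_mult)
    also have "\<dots> \<le> (2 * real (Suc m)) * \<rho> ^ tri m * L ^ m * (\<rho> ^ m * L)"
      using assms by (intro mult_right_mono mult_nonneg_nonneg) auto
    also have "\<dots> = real (Suc m) * \<rho> ^ tri m * L ^ m * (2 * L * \<rho> ^ m)" by simp
    also have "\<dots> \<le> real (Suc m) * \<rho> ^ tri m * L ^ m * (1/2)"
      using N[OF m] assms by (intro mult_left_mono) auto
    also have "\<dots> = 1/2 * norm (real (Suc m) * \<rho> ^ tri m * L ^ m)"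
      using assms by (simp add: abs_mult)
    finally show "norm (real (Suc (Suc m)) * \<rho> ^ tri (Suc m) * L ^ Suc m)
        \<le> 1/2 * norm (real (Suc m) * \<rho> ^ tri m * L ^ m)" .
  qed simp
qed

lemma summable_tri':
  fixes \<rho> L :: real
  assumes "0 \<le> \<rho>" "\<rho> < 1" "0 \<le> L"
  shows "summable (\<lambda>m. \<rho> ^ tri m * L ^ m)"
proof (rule summable_comparison_test[OF _ summable_tri[OF assms]])
  show "\<exists>N. \<forall>n\<ge>N. norm (\<rho> ^ tri n * L ^ n) \<le> real (Suc n) * \<rho> ^ tri n * L ^ n"
  proof (intro exI allI impI)
    fix n :: nat
    have "\<rho> ^ tri n * L ^ n \<le> real (Suc n) * (\<rho> ^ tri n * L ^ n)"
      using mult_right_mono[of 1 "real (Suc n)" "\<rho> ^ tri n * L ^ n"] assms by simp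
    then show "norm (\<rho> ^ tri n * L ^ n) \<le> real (Suc n) * \<rho> ^ tri n * L ^ n"
      using assms by (simp add: abs_mult mult.assoc)
  qed
qed

definition Pw :: "complex \<Rightarrow> complex \<Rightarrow> nat \<Rightarrow> complex" where
  "Pw q x n = (\<Prod>k<n. (q ^ Suc k - x))"

lemma Pw_0 [simp]: "Pw q x 0 = 1" by (simp add: Pw_def)
lemma Pw_Suc: "Pw q x (Suc n) = Pw q x n * (q ^ Suc n - x)" by (simp add: Pw_def)

lemma Pw_bound:
  fixes q :: complex assumes "norm q < 1"
  shows "norm (Pw q x n) \<le> (1 + norm x) ^ n"
proof -
  have "norm (Pw q x n) = (\<Prod>k<n. norm (q ^ Suc k - x))" unfolding Pw_def by (rule prod_norm[symmetric])
  also have "\<dots> \<le> (\<Prod>k<n. 1 + norm x)"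
  proof (rule prod_mono)
    fix k
    have "norm (q ^ Suc k) = norm q ^ Suc k" by (rule norm_power)
    also have "\<dots> \<le> 1" using assms by (intro power_le_one) auto
    finally have "norm (q ^ Suc k) \<le> 1" .
    then have "norm (q ^ Suc k - x) \<le> 1 + norm x"
      using norm_triangle_ineq4[of "q ^ Suc k" x] by linarith
    then show "0 \<le> norm (q ^ Suc k - x) \<and> norm (q ^ Suc k - x) \<le> 1 + norm x" by simp
  qed
  finally show ?thesis by simp
qed

lemma Pm_bound:
  fixes q :: complex assumes "norm q < 1"
  shows "norm (Pm q x n) \<le> (1 + norm x) ^ n"
proof -
  have "norm (Pm q x n) = (\<Prod>k<n. norm (x - q ^ Suc k))" unfolding Pm_def by (rule prod_norm[symmetric])
  also have "\<dots> \<le> (\<Prod>k<n. 1 + norm x)"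
  proof (rule prod_mono)
    fix k
    have "norm (q ^ Suc k) = norm q ^ Suc k" by (rule norm_power)
    also have "\<dots> \<le> 1" using assms by (intro power_le_one) auto
    finally have "norm (q ^ Suc k) \<le> 1" .
    then have "norm (x - q ^ Suc k) \<le> 1 + norm x"
      using norm_triangle_ineq4[of x "q ^ Suc k"] by linarith
    then show "0 \<le> norm (x - q ^ Suc k) \<and> norm (x - q ^ Suc k) \<le> 1 + norm x" by simp
  qed
  finally show ?thesis by simp
qed

lemma qpoch_q_nz: fixes q :: complex assumes "norm q < 1" shows "qpoch q q n \<noteq> 0"
  using qpoch_q_nonzero[OF assms, of 0 n] by simp

lemma qpoch_inf_q_nz: fixes q :: complex assumes "norm q < 1" shows "qpoch_inf q q \<noteq> 0"
  using qpoch_inf_nonzero[OF assms qpoch_q_nz[OF assms]] .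

lemma rq_tendsto: fixes q :: complex assumes "norm q < 1"
  shows "(\<lambda>k. rq q k) \<longlonglongrightarrow> 1 / qpoch_inf q q"
  unfolding rq_def by (intro tendsto_divide tendsto_const qpoch_tendsto assms qpoch_inf_q_nz)

lemma rq_bounded: fixes q :: complex assumes "norm q < 1"
  obtains B where "B > 0" "\<And>k. norm (rq q k) \<le> B"
  using convergent_imp_Bseq[OF convergentI[OF rq_tendsto[OF assms]]] by (auto elim!: BseqE)


definition hK :: "complex \<Rightarrow> complex \<Rightarrow> nat \<Rightarrow> nat \<Rightarrow> complex" where
  "hK q d s m = q ^ tri m * q ^ (s * m) * Pw q d m * rq q m * rq q (s + m)"

definition HK :: "complex \<Rightarrow> complex \<Rightarrow> nat \<Rightarrow> complex" where
  "HK q d s = (\<Sum>m. hK q d s m)"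

context
  fixes q d :: complex
  assumes q1: "norm q < 1"
begin

lemma hK_bound:
  assumes B: "\<And>k. norm (rq q k) \<le> B"
  shows "norm (hK q d s m) \<le> B^2 * (norm q ^ tri m * (1 + norm d) ^ m) * norm q ^ (s * m)"
proof -
  have B0: "0 \<le> B" using B[of 0] norm_ge_zero order_trans by blast
  have "norm (hK q d s m) = norm q ^ tri m * norm q ^ (s * m) * norm (Pw q d m) * norm (rq q m) * norm (rq q (s + m))"
    by (simp add: hK_def norm_mult norm_power)
  also have "\<dots> \<le> norm q ^ tri m * norm q ^ (s * m) * (1 + norm d) ^ m * B * B"
    using B0 by (intro mult_mono Pw_bound[OF q1] B mult_nonneg_nonneg) auto
  finally show ?thesis by (simp add: power2_eq_square mult_ac)
qed

lemma hK_summable: "summable (hK q d s)"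
proof -
  obtain B where B: "B > 0" "\<And>k. norm (rq q k) \<le> B" using rq_bounded[OF q1] by blast
  have "summable (\<lambda>m. B^2 * (norm q ^ tri m * (1 + norm d) ^ m))"
    by (intro summable_mult summable_tri') (use q1 in auto)
  then show ?thesis
  proof (rule summable_comparison_test[rotated], intro exI allI impI)
    fix m :: nat
    have "norm q ^ (s * m) \<le> 1" using q1 by (intro power_le_one) auto
    then have "B^2 * (norm q ^ tri m * (1 + norm d) ^ m) * norm q ^ (s * m) \<le> B^2 * (norm q ^ tri m * (1 + norm d) ^ m)"
      by (intro mult_left_le) auto
    then show "norm (hK q d s m) \<le> B^2 * (norm q ^ tri m * (1 + norm d) ^ m)"
      using hK_bound[OF B(2), of s m] by linarith
  qed
qed

lemma hK_contig:
  "hK q d s m - (1 - d * q ^ s) * hK q d (Suc s) m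
     = (1 - q ^ m) * hK q d s m - (1 - q ^ Suc m) * hK q d s (Suc m)"
proof -
  define x where "x = q ^ m"
  define y where "y = q ^ s"
  define h where "h = hK q d s m"
  have E: "1 - q * x * y \<noteq> 0" using one_minus_qpow_nz[OF q1, of "s + m"]
    by (simp add: x_def y_def power_add mult_ac)
  have F: "1 - q * x \<noteq> 0" using one_minus_qpow_nz[OF q1, of m] by (simp add: x_def)
  have r1: "rq q (Suc (s + m)) = rq q (s + m) / (1 - q * x * y)"
    using rq_Suc[OF q1, of "s + m"] by (simp add: x_def y_def power_add mult_ac)
  have r2: "rq q (Suc m) = rq q m / (1 - q * x)"
    using rq_Suc[OF q1, of m] by (simp add: x_def)
  have h1: "hK q d (Suc s) m = h * x / (1 - q * x * y)"
    unfolding h_def hK_def using r1 by (simp add: x_def power_add mult_ac)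
  have h2: "hK q d s (Suc m) = h * x * y * (q * x - d) / ((1 - q * x) * (1 - q * x * y))"
    unfolding h_def hK_def using r1 r2
    by (simp add: x_def y_def Pw_Suc power_add mult_ac add.commute[of s m] flip: add_Suc)
  show ?thesis
    unfolding h1 h2 h_def[symmetric] x_def[symmetric] y_def[symmetric] power_Suc
    using E F by (simp add: divide_simps) algebra
qed

lemma HK_rec: "HK q d s = (1 - d * q ^ s) * HK q d (Suc s)"
proof -
  let ?g = "\<lambda>m. (1 - q ^ m) * hK q d s m"
  have "(\<lambda>m. hK q d s m) \<longlonglongrightarrow> 0" by (rule summable_LIMSEQ_zero[OF hK_summable])
  then have "?g \<longlonglongrightarrow> (1 - 0) * 0"
    by (intro tendsto_mult tendsto_diff tendsto_const LIMSEQ_power_zero) (use q1 in auto)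
  then have "(\<lambda>m. ?g m - ?g (Suc m)) sums (?g 0 - 0)" using telescope_sums' by fastforce
  then have "(\<lambda>m. hK q d s m - (1 - d * q ^ s) * hK q d (Suc s) m) sums 0"
    by (simp add: hK_contig)
  moreover have "(\<lambda>m. hK q d s m - (1 - d * q ^ s) * hK q d (Suc s) m) sums (HK q d s - (1 - d * q ^ s) * HK q d (Suc s))"
    unfolding HK_def
    by (intro sums_diff summable_sums sums_mult hK_summable)
  ultimately show ?thesis using sums_unique2 by fastforce
qed

lemma HK_iter: "HK q d s = qpoch (d * q ^ s) q N * HK q d (s + N)"
proof (induction N)
  case (Suc N)
  then show ?case using HK_rec[of "s + N"] by (simp add: qpoch_Suc power_add mult_ac)
qed simp

lemma HK_lim: "(\<lambda>S. HK q d S) \<longlonglongrightarrow> 1 / qpoch_inf q q"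
proof -
  obtain B where B: "B > 0" "\<And>k. norm (rq q k) \<le> B" using rq_bounded[OF q1] by blast
  define M where "M = (\<Sum>m. B^2 * (norm q ^ tri (Suc m) * (1 + norm d) ^ Suc m))"
  have sM: "summable (\<lambda>m. B^2 * (norm q ^ tri (Suc m) * (1 + norm d) ^ Suc m))"
    by (subst summable_Suc_iff, intro summable_mult summable_tri') (use q1 in auto)
  have bnd: "norm (HK q d S - rq q S) \<le> norm q ^ S * M" for S
  proof -
    have h0: "hK q d S 0 = rq q S" by (simp add: hK_def rq_def)
    have "HK q d S - rq q S = (\<Sum>m. hK q d S (Suc m))"
      using suminf_split_head[OF hK_summable, of S] unfolding HK_def h0 by simp
    also have "norm \<dots> \<le> (\<Sum>m. norm q ^ S * (B^2 * (norm q ^ tri (Suc m) * (1 + norm d) ^ Suc m)))"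
    proof (rule norm_suminf_le)
      fix m
      have "norm q ^ (S * Suc m) \<le> norm q ^ S"
        using q1 by (intro power_decreasing) auto
      then have "B^2 * (norm q ^ tri (Suc m) * (1 + norm d) ^ Suc m) * norm q ^ (S * Suc m)
         \<le> B^2 * (norm q ^ tri (Suc m) * (1 + norm d) ^ Suc m) * norm q ^ S"
        by (intro mult_left_mono) auto
      moreover have "B^2 * (norm q ^ tri (Suc m) * (1 + norm d) ^ Suc m) * norm q ^ S
          = norm q ^ S * (B^2 * (norm q ^ tri (Suc m) * (1 + norm d) ^ Suc m))" by (rule mult.commute)
      ultimately show "norm (hK q d S (Suc m)) \<le> norm q ^ S * (B^2 * (norm q ^ tri (Suc m) * (1 + norm d) ^ Suc m))"
        using hK_bound[OF B(2), of S "Suc m"] by linarith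
    next
      show "summable (\<lambda>m. norm q ^ S * (B^2 * (norm q ^ tri (Suc m) * (1 + norm d) ^ Suc m)))"
        by (intro summable_mult sM)
    qed
    also have "\<dots> = norm q ^ S * M" unfolding M_def by (rule suminf_mult[OF sM])
    finally show ?thesis .
  qed
  have "(\<lambda>S. norm q ^ S * M) \<longlonglongrightarrow> 0 * M"
    by (intro tendsto_mult tendsto_const LIMSEQ_power_zero) (use q1 in auto)
  then have g0: "(\<lambda>S. norm q ^ S * M) \<longlonglongrightarrow> 0" by simp
  have "(\<lambda>S. HK q d S - rq q S) \<longlonglongrightarrow> 0"
    by (rule Lim_null_comparison[OF always_eventually g0]) (rule allI, rule bnd)
  from tendsto_add[OF this rq_tendsto[OF q1]] show ?thesis by simp
qed

lemma HK_closed: "HK q d s = qpoch_inf (d * q ^ s) q / qpoch_inf q q"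
proof -
  have "(\<lambda>N. HK q d (N + s)) \<longlonglongrightarrow> 1 / qpoch_inf q q"
    by (rule LIMSEQ_ignore_initial_segment[OF HK_lim])
  then have l: "(\<lambda>N. HK q d (s + N)) \<longlonglongrightarrow> 1 / qpoch_inf q q" by (simp add: add.commute)
  have "(\<lambda>N. qpoch (d * q ^ s) q N * HK q d (s + N)) \<longlonglongrightarrow> qpoch_inf (d * q ^ s) q * (1 / qpoch_inf q q)"
    by (intro tendsto_mult qpoch_tendsto[OF q1] l)
  moreover have "(\<lambda>N. qpoch (d * q ^ s) q N * HK q d (s + N)) = (\<lambda>N. HK q d s)"
    by (rule ext) (rule HK_iter[symmetric])
  ultimately show ?thesis using LIMSEQ_const_iff by fastforce
qed

end

definition w :: "complex \<Rightarrow> complex \<Rightarrow> nat \<Rightarrow> complex" where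
  "w q c n = q ^ tri n * Pw q c n"

definition LL :: "complex \<Rightarrow> complex \<Rightarrow> nat \<Rightarrow> complex" where
  "LL q c r = (\<Sum>m. w q c (m + r) * rq q m * rq q (m + 2 * r))"

definition FF :: "complex \<Rightarrow> complex \<Rightarrow> complex \<Rightarrow> nat \<Rightarrow> nat \<Rightarrow> complex" where
  "FF q a c n r = (if r \<le> n then alph q a r * w q c n * rq q (n - r) * rq q (n + r) else 0)"

lemma Pw_add:
  fixes q c :: complex assumes "q \<noteq> 0"
  shows "Pw q c (r + m) = Pw q c r * q ^ (r * m) * Pw q (c / q ^ r) m"
proof (induction m)
  case (Suc m)
  have "q ^ Suc (r + m) - c = q ^ r * (q ^ Suc m - c / q ^ r)"
    using assms by (simp add: field_simps power_add)
  then show ?case using Suc by (simp add: Pw_Suc power_add mult_ac)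
qed simp

lemma infsum_suminf:
  fixes f :: "nat \<Rightarrow> complex"
  assumes "summable (\<lambda>n. norm (f n))"
  shows "infsum f UNIV = suminf f"
  using infsumI[OF norm_summable_imp_has_sum[OF assms summable_sums[OF summable_norm_cancel[OF assms]]]] .

lemma summable_on_suminf:
  fixes f :: "nat \<Rightarrow> complex"
  assumes "f summable_on UNIV"
  shows "summable f" "suminf f = infsum f UNIV"
  using summable_on_imp_summable[OF assms] apply simp
  using has_sum_imp_sums[OF has_sum_infsum[OF assms]] by (simp add: sums_iff)

context
  fixes q a c :: complex
  assumes q1: "norm q < 1" and q0: "q \<noteq> 0" and an: "\<And>n. qpoch a q n \<noteq> 0"
begin

lemma w_shift: "w q c (m + r) * rq q m * rq q (m + 2 * r) = w q c r * hK q (c / q ^ r) (2 * r) m"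
proof -
  have "Pw q c (m + r) = Pw q c r * q ^ (r * m) * Pw q (c / q ^ r) m"
    using Pw_add[OF q0, of c r m] by (simp add: add.commute)
  moreover have "q ^ (tri m + tri r + m * r) = q ^ tri m * q ^ tri r * q ^ (r * m)"
    by (simp add: power_add mult.commute)
  moreover have "q ^ (2 * r * m) = q ^ (r * m) * q ^ (r * m)"
    by (simp add: power_add[symmetric] mult_2 add_mult_distrib)
  moreover have "rq q (m + 2 * r) = rq q (2 * r + m)" by (simp add: add.commute)
  ultimately show ?thesis
    unfolding w_def hK_def tri_add by (simp add: mult_ac)
qed

lemma LL_summable: "summable (\<lambda>m. w q c (m + r) * rq q m * rq q (m + 2 * r))"
  unfolding w_shift by (intro summable_mult hK_summable[OF q1])

lemma LL_closed: "LL q c r = w q c r * qpoch_inf (c * q ^ r) q / qpoch_inf q q"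
proof -
  have "LL q c r = w q c r * HK q (c / q ^ r) (2 * r)"
    unfolding LL_def w_shift HK_def by (rule suminf_mult[OF hK_summable[OF q1]])
  also have "\<dots> = w q c r * qpoch_inf (c * q ^ r) q / qpoch_inf q q"
    unfolding HK_closed[OF q1] using q0 by (simp add: power_mult[symmetric] mult_2 power_add)
  finally show ?thesis .
qed

lemma FF_bound: obtains C L where "C \<ge> 0" "L \<ge> 0"
  "\<And>n r. norm (FF q a c n r) \<le> C * (norm q ^ tri n * L ^ n)"
proof -
  obtain B where B: "B > 0" "\<And>k. norm (rq q k) \<le> B" using rq_bounded[OF q1] by blast
  have ai: "qpoch_inf a q \<noteq> 0" by (rule qpoch_inf_nonzero[OF q1 an])
  have "(\<lambda>r. 1 / qpoch a q r) \<longlonglongrightarrow> 1 / qpoch_inf a q"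
    by (intro tendsto_divide tendsto_const qpoch_tendsto[OF q1] ai)
  from convergent_imp_Bseq[OF convergentI[OF this]] obtain A where A: "A > 0" "\<And>r. norm (1 / qpoch a q r) \<le> A"
    by (auto elim!: BseqE)
  define L where "L = (1 + norm a) * (1 + norm c)"
  define C where "C = 2 * A * B^2"
  show ?thesis
  proof (rule that[of C L])
    show "C \<ge> 0" "L \<ge> 0" using A B by (auto simp: C_def L_def)
    fix n r
    show "norm (FF q a c n r) \<le> C * (norm q ^ tri n * L ^ n)"
    proof (cases "r \<le> n")
      case False then show ?thesis using A B by (simp add: FF_def C_def L_def)
    next
      case True
      have tq: "norm q ^ tri r \<le> 1" using q1 by (intro power_le_one) auto
      have "norm (V q a r) = norm q ^ tri r * norm (Pm q a r) * norm (1 / qpoch a q r)"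
        by (simp add: V_def norm_mult norm_power norm_divide)
      also have "\<dots> \<le> 1 * (1 + norm a) ^ r * A"
        by (intro mult_mono tq Pm_bound[OF q1] A(2)) auto
      also have "\<dots> \<le> (1 + norm a) ^ n * A"
      proof -
        have "(1 + norm a) ^ r \<le> (1 + norm a) ^ n" by (rule power_increasing[OF True]) simp
        then show ?thesis using A by simp
      qed
      finally have Vb: "norm (V q a r) \<le> (1 + norm a) ^ n * A" .
      have "norm (alph q a r) \<le> 2 * norm (V q a r)"
        unfolding alph_def by (auto simp: norm_mult)
      then have ab: "norm (alph q a r) \<le> 2 * ((1 + norm a) ^ n * A)"
        using Vb by linarith
      have wb: "norm (w q c n) \<le> norm q ^ tri n * (1 + norm c) ^ n"
        unfolding w_def norm_mult norm_power by (intro mult_left_mono Pw_bound[OF q1]) auto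
      have "norm (FF q a c n r) = norm (alph q a r) * norm (w q c n) * norm (rq q (n - r)) * norm (rq q (n + r))"
        using True by (simp add: FF_def norm_mult)
      also have "\<dots> \<le> (2 * ((1 + norm a) ^ n * A)) * (norm q ^ tri n * (1 + norm c) ^ n) * B * B"
        using A B by (intro mult_mono ab wb B(2)) (auto intro!: mult_nonneg_nonneg)
      also have "\<dots> = C * (norm q ^ tri n * L ^ n)"
        by (simp add: C_def L_def power_mult_distrib power2_eq_square mult_ac)
      finally show ?thesis .
    qed
  qed
qed

lemma FF_row: "infsum (\<lambda>r. FF q a c n r) UNIV = w q c n * bet q a n"
proof -
  have "infsum (\<lambda>r. FF q a c n r) UNIV = infsum (\<lambda>r. FF q a c n r) {..n}"
    by (rule infsum_cong_neutral) (auto simp: FF_def)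
  also have "\<dots> = (\<Sum>r\<le>n. FF q a c n r)" by simp
  also have "\<dots> = w q c n * bet q a n"
    by (simp add: FF_def bet_def sum_distrib_left mult_ac)
  finally show ?thesis .
qed

lemma FF_row_norm: "infsum (\<lambda>r. norm (FF q a c n r)) UNIV = (\<Sum>r\<le>n. norm (FF q a c n r))"
proof -
  have "infsum (\<lambda>r. norm (FF q a c n r)) UNIV = infsum (\<lambda>r. norm (FF q a c n r)) {..n}"
    by (rule infsum_cong_neutral) (auto simp: FF_def)
  then show ?thesis by simp
qed

lemma FF_abs_summable: "(\<lambda>p. norm (FF q a c (fst p) (snd p))) summable_on UNIV"
proof -
  obtain C L where CL: "C \<ge> 0" "L \<ge> 0" "\<And>n r. norm (FF q a c n r) \<le> C * (norm q ^ tri n * L ^ n)"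
    using FF_bound by blast
  have rows: "(\<lambda>r. norm (FF q a c n r)) summable_on UNIV" for n
  proof -
    have "(\<lambda>r. norm (FF q a c n r)) summable_on {..n}" by simp
    then show ?thesis
      by (subst summable_on_cong_neutral[where T = "{..n}"]) (auto simp: FF_def)
  qed
  have "summable (\<lambda>n. C * (real (Suc n) * norm q ^ tri n * L ^ n))"
    by (intro summable_mult summable_tri) (use q1 CL in auto)
  then have "summable (\<lambda>n. \<Sum>r\<le>n. norm (FF q a c n r))"
  proof (rule summable_comparison_test[rotated], intro exI allI impI)
    fix n :: nat
    have "(\<Sum>r\<le>n. norm (FF q a c n r)) \<le> (\<Sum>r\<le>n. C * (norm q ^ tri n * L ^ n))"
      by (intro sum_mono CL(3))
    then show "norm (\<Sum>r\<le>n. norm (FF q a c n r)) \<le> C * (real (Suc n) * norm q ^ tri n * L ^ n)"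
      by (simp add: sum_nonneg mult_ac)
  qed
  then have "(\<lambda>n. \<Sum>r\<le>n. norm (FF q a c n r)) summable_on UNIV"
    by (subst summable_on_UNIV_nonneg_real_iff) (auto intro: sum_nonneg)
  then have cols: "(\<lambda>n. norm (infsum (\<lambda>r. norm (FF q a c n r)) UNIV)) summable_on UNIV"
    by (simp add: FF_row_norm sum_nonneg)
  have "(\<lambda>p. norm (FF q a c (fst p) (snd p))) summable_on Sigma UNIV (\<lambda>_. UNIV)"
    by (rule iffD2[OF Infinite_Sum.abs_summable_on_Sigma_iff]) (use rows cols in auto)
  then show ?thesis by simp
qed

lemma FF_col_norm_summable: "summable (\<lambda>n. norm (FF q a c n r))"
proof -
  obtain C L where CL: "C \<ge> 0" "L \<ge> 0" "\<And>n r. norm (FF q a c n r) \<le> C * (norm q ^ tri n * L ^ n)"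
    using FF_bound by blast
  have "summable (\<lambda>n. C * (norm q ^ tri n * L ^ n))"
    by (intro summable_mult summable_tri') (use q1 CL in auto)
  then show ?thesis by (rule summable_comparison_test[rotated]) (use CL in auto)
qed

lemma FF_col: "infsum (\<lambda>n. FF q a c n r) UNIV = alph q a r * LL q c r"
proof -
  have "infsum (\<lambda>n. FF q a c n r) UNIV = (\<Sum>n. FF q a c n r)"
    by (rule infsum_suminf[OF FF_col_norm_summable])
  also have "\<dots> = (\<Sum>m. FF q a c (m + r) r)"
    using suminf_split_initial_segment[OF summable_norm_cancel[OF FF_col_norm_summable], where k=r]
    by (simp add: FF_def)
  also have "\<dots> = (\<Sum>m. alph q a r * w q c (m + r) * rq q m * rq q (m + r + r))"
    by (simp add: FF_def)
  also have "\<dots> = (\<Sum>m. alph q a r * (w q c (m + r) * rq q m * rq q (m + 2 * r)))"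
    by (simp add: FF_def mult_ac mult_2 mult_2_right add.assoc)
  also have "\<dots> = alph q a r * LL q c r"
    unfolding LL_def by (rule suminf_mult[OF LL_summable])
  finally show ?thesis .
qed

lemma bailey_swap:
  "summable (\<lambda>r. alph q a r * LL q c r)" "summable (\<lambda>n. w q c n * bet q a n)"
  "(\<Sum>r. alph q a r * LL q c r) = (\<Sum>n. w q c n * bet q a n)"
proof -
  have S: "(\<lambda>(n, r). FF q a c n r) summable_on UNIV \<times> UNIV"
    using abs_summable_summable[OF FF_abs_summable] by (simp add: case_prod_beta')
  have S': "(\<lambda>(r, n). FF q a c n r) summable_on UNIV \<times> UNIV"
    using S by (subst summable_on_swap) (simp add: case_prod_beta')
  have r1: "(\<lambda>n. infsum (\<lambda>r. FF q a c n r) UNIV) summable_on UNIV"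
    using summable_on_Sigma_banach[of "\<lambda>n r. FF q a c n r" UNIV "\<lambda>_. UNIV"] S by simp
  have c1: "(\<lambda>r. infsum (\<lambda>n. FF q a c n r) UNIV) summable_on UNIV"
    using summable_on_Sigma_banach[of "\<lambda>r n. FF q a c n r" UNIV "\<lambda>_. UNIV"] S' by simp
  have r2: "(\<lambda>n. w q c n * bet q a n) summable_on UNIV" using r1 by (simp add: FF_row)
  have c2: "(\<lambda>r. alph q a r * LL q c r) summable_on UNIV" using c1 by (simp add: FF_col)
  show "summable (\<lambda>r. alph q a r * LL q c r)" by (rule summable_on_suminf(1)[OF c2])
  show "summable (\<lambda>n. w q c n * bet q a n)" by (rule summable_on_suminf(1)[OF r2])
  have "infsum (\<lambda>n. infsum (\<lambda>r. FF q a c n r) UNIV) UNIV = infsum (\<lambda>r. infsum (\<lambda>n. FF q a c n r) UNIV) UNIV"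
    by (rule infsum_swap_banach) (use S in simp)
  then show "(\<Sum>r. alph q a r * LL q c r) = (\<Sum>n. w q c n * bet q a n)"
    using summable_on_suminf(2)[OF c2] summable_on_suminf(2)[OF r2] by (simp add: FF_row FF_col)
qed

end

lemma tri2: "2 * tri n + n = n ^ 2"
  by (induction n) (simp_all add: power2_eq_square algebra_simps)

lemma Pm_qpoch: fixes q a :: complex assumes "a \<noteq> 0"
  shows "Pm q a n = a ^ n * qpoch (q / a) q n"
  by (induction n) (use assms in \<open>simp_all add: Pm_Suc qpoch_Suc field_simps\<close>)

lemma Pw_qpoch: fixes q c :: complex assumes "c \<noteq> 0"
  shows "Pw q c n = (- c) ^ n * qpoch (q / c) q n"
  by (induction n) (use assms in \<open>simp_all add: Pw_Suc qpoch_Suc field_simps\<close>)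

definition TT :: "complex \<Rightarrow> nat \<Rightarrow> complex" where
  "TT q n = (\<Sum>j\<in>{-int n..int n}. (-1) powi j * q powi (j ^ 2))"

definition dd :: "complex \<Rightarrow> nat \<Rightarrow> complex" where
  "dd q n = (if n = 0 then 1 else 2 * (-1) ^ n * q ^ (n ^ 2))"

lemma TT_0: "TT q 0 = 1" by (simp add: TT_def)

lemma TT_Suc: "TT q (Suc n) = TT q n + dd q (Suc n)"
proof -
  have s: "{-int (Suc n)..int (Suc n)} = insert (- int (Suc n)) (insert (int (Suc n)) {-int n..int n})"
    by auto
  have p1: "(-1::complex) powi (int (Suc n)) = (-1) ^ Suc n" by (rule power_int_of_nat)
  have p2: "q powi ((int (Suc n))^2) = q ^ (Suc n ^ 2)"
    by (metis of_nat_power power_int_of_nat)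
  have e1: "(-1::complex) powi (int (Suc n)) * q powi ((int (Suc n))^2) = (-1) ^ Suc n * q ^ (Suc n ^ 2)"
    using p1 p2 by simp
  have e2: "(-1::complex) powi (- int (Suc n)) * q powi ((- int (Suc n))^2) = (-1) ^ Suc n * q ^ (Suc n ^ 2)"
  proof -
    have m1: "(-1::complex) powi (- int (Suc n)) = inverse ((-1) powi int (Suc n))" by (rule power_int_minus)
    have m2: "(- int (Suc n))^2 = (int (Suc n))^2" by (rule power2_minus)
    show ?thesis unfolding m1 m2 p1 p2 by (simp add: power_inverse[symmetric])
  qed
  have "TT q (Suc n) = (-1::complex) powi (- int (Suc n)) * q powi ((- int (Suc n))^2)
      + ((-1::complex) powi (int (Suc n)) * q powi ((int (Suc n))^2) + TT q n)"
    unfolding TT_def s by (subst sum.insert, simp, simp, subst sum.insert, simp, simp, rule refl)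
  also have "\<dots> = TT q n + dd q (Suc n)"
    unfolding e1 e2 dd_def by simp
  finally show ?thesis .
qed

lemma dd_bound: fixes q :: complex assumes "norm q < 1" shows "norm (dd q n) \<le> 2 * norm q ^ n"
proof -
  have "norm q ^ (n^2) \<le> norm q ^ n"
    using assms by (intro power_decreasing) (auto simp: power2_eq_square)
  then show ?thesis by (auto simp: dd_def norm_mult norm_power)
qed

lemma TT_bound: fixes q :: complex assumes "norm q < 1" shows "norm (TT q n) \<le> 2 / (1 - norm q)"
proof -
  have "TT q n = (\<Sum>k\<le>n. dd q k)"
    by (induction n) (simp_all add: TT_0 TT_Suc dd_def)
  then have "norm (TT q n) \<le> (\<Sum>k\<le>n. 2 * norm q ^ k)"
    by (metis (no_types, lifting) dd_bound[OF assms] norm_sum order_trans sum_mono)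
  also have "\<dots> \<le> (\<Sum>k. 2 * norm q ^ k)"
    by (intro sum_le_suminf summable_mult summable_geometric) (use assms in auto)
  also have "\<dots> = 2 / (1 - norm q)"
    using suminf_mult[OF summable_geometric[of "norm q"]] suminf_geometric[of "norm q"] assms by simp
  finally show ?thesis .
qed

lemma key_alg:
  fixes a c x t A C PA PC I D :: complex and n :: nat
  assumes "x \<noteq> 0" "A \<noteq> 0" "C \<noteq> 0" "1 - a * x \<noteq> 0" "1 - c * x \<noteq> 0" "1 - a \<noteq> 0" "D \<noteq> 0"
  shows "(1 - a * x) * (1 - c * x) * inverse x * (PA * PC / (A * (1 - a * x) * (C * (1 - c * x))) * (a * c) ^ n) / D * (2 * (-1) ^ n * (t * t * x)) * (D * (C * I))
   = (1 - a) * (2 * (t * (a ^ n * PA) / ((1 - a) * A))) * (t * ((- c) ^ n * PC)) * I"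
proof -
  have m: "(- c) ^ n = (-1) ^ n * c ^ n" by (rule power_minus)
  show ?thesis unfolding m using assms
    by (simp add: divide_simps power_mult_distrib)
qed

context
  fixes q a c :: complex
  assumes q0: "0 < cmod q" and q1: "cmod q < 1" and a0: "a \<noteq> 0" and c0: "c \<noteq> 0"
    and acq: "cmod (a * c) < cmod q"
    and qan: "\<And>n. qpoch (q * a) q n \<noteq> 0"
    and qcn: "\<And>n. qpoch (q * c) q n \<noteq> 0"
    and an: "\<And>n. qpoch a q n \<noteq> 0"
    and acq': "a * c \<noteq> q"
    and qci: "qpoch_inf (q * c) q \<noteq> 0"
begin

lemma qnz: "q \<noteq> 0" using q0 by auto

definition XX :: "nat \<Rightarrow> complex" where
  "XX n = (qpoch (q / a) q n * qpoch (q / c) q n) / (qpoch (q * a) q n * qpoch (q * c) q n) * (a * c) ^ n"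

definition tt :: "nat \<Rightarrow> complex" where
  "tt n = (1 - q ^ (2 * n + 1)) * inverse (q ^ n) * XX n"

definition GG :: "nat \<Rightarrow> complex" where
  "GG n = (1 - a * q ^ n) * (1 - c * q ^ n) * inverse (q ^ n) * XX n / (1 - a * c / q)"

lemma acq_nz: "1 - a * c / q \<noteq> 0" using acq' qnz by (simp add: field_simps)

lemma tt_GG: "tt n = GG n - GG (Suc n)"
proof -
  define x where "x = q ^ n"
  have x0: "x \<noteq> 0" using qnz by (simp add: x_def)
  have A: "1 - q * a * x \<noteq> 0" using qan[of "Suc n"] by (simp add: qpoch_Suc x_def)
  have C: "1 - q * c * x \<noteq> 0" using qcn[of "Suc n"] by (simp add: qpoch_Suc x_def)
  have XS: "XX (Suc n) = XX n * (1 - q / a * x) * (1 - q / c * x) * (a * c) / ((1 - q * a * x) * (1 - q * c * x))"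
    using qan[of n] qcn[of n] A C by (simp add: XX_def qpoch_Suc x_def field_simps)
  have x2: "q ^ (2 * n) = x ^ 2" by (simp add: x_def power_mult[symmetric] mult.commute)
  show ?thesis
    unfolding tt_def GG_def XS x_def[symmetric] power_Suc power_add x2
    using x0 A C acq_nz a0 c0 qnz
    by (simp add: divide_simps) algebra
qed

lemma partial_sum: "(\<Sum>n<N. tt n * TT q n) + GG N * TT q N = (\<Sum>n<Suc N. GG n * dd q n)"
proof (induction N)
  case 0 then show ?case by (simp add: TT_0 dd_def)
next
  case (Suc N)
  have "(\<Sum>n<Suc N. tt n * TT q n) + GG (Suc N) * TT q (Suc N)
      = ((\<Sum>n<N. tt n * TT q n) + GG N * TT q N) + GG (Suc N) * dd q (Suc N)"
    by (simp add: tt_GG TT_Suc algebra_simps)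
  then show ?case using Suc by simp
qed

lemma qai: "qpoch_inf (q * a) q \<noteq> 0" by (rule qpoch_inf_nonzero[OF q1 qan])

lemma GG_tendsto: "GG \<longlonglongrightarrow> 0"
proof -
  define F where "F N = (1 - a * q ^ N) * (1 - c * q ^ N) *
     ((qpoch (q / a) q N * qpoch (q / c) q N) / (qpoch (q * a) q N * qpoch (q * c) q N)) / (1 - a * c / q)" for N
  have GF: "GG = (\<lambda>N. F N * (a * c / q) ^ N)"
  proof (rule ext)
    fix N
    have e: "(a * c / q) ^ N = (a * c) ^ N * inverse (q ^ N)"
      unfolding power_divide by (rule divide_inverse)
    show "GG N = F N * (a * c / q) ^ N" unfolding e GG_def F_def XX_def
      by (simp add: divide_inverse mult_ac)
  qed
  define Fl where "Fl = (1 - a * 0) * (1 - c * 0) *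
     ((qpoch_inf (q / a) q * qpoch_inf (q / c) q) / (qpoch_inf (q * a) q * qpoch_inf (q * c) q)) / (1 - a * c / q)"
  have lF: "F \<longlonglongrightarrow> Fl"
    unfolding F_def Fl_def
    by (intro tendsto_intros qpoch_tendsto[OF q1] LIMSEQ_power_zero) (use q1 qai qci acq_nz acq' in auto)
  have l0: "(\<lambda>N. (a * c / q) ^ N) \<longlonglongrightarrow> 0"
    by (rule LIMSEQ_power_zero) (use acq q0 in \<open>simp add: norm_divide\<close>)
  have "(\<lambda>N. F N * (a * c / q) ^ N) \<longlonglongrightarrow> Fl * 0" by (rule tendsto_mult[OF lF l0])
  then show ?thesis unfolding GF by simp
qed

lemma GGdd_summable: "summable (\<lambda>n. GG n * dd q n)"
proof -
  from convergent_imp_Bseq[OF convergentI[OF GG_tendsto]] obtain M where M: "M > 0" "\<And>n. norm (GG n) \<le> M"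
    by (auto elim!: BseqE)
  have "summable (\<lambda>n. M * (2 * norm q ^ n))"
    by (intro summable_mult summable_geometric) (use q1 in auto)
  then show ?thesis
  proof (rule summable_comparison_test[rotated], intro exI allI impI)
    fix n :: nat
    show "norm (GG n * dd q n) \<le> M * (2 * norm q ^ n)"
      unfolding norm_mult by (intro mult_mono M(2) dd_bound[OF q1]) (use M in auto)
  qed
qed

lemma LHS_sums: "(\<lambda>n. tt n * TT q n) sums (\<Sum>n. GG n * dd q n)"
proof -
  have e: "(\<Sum>n<N. tt n * TT q n) = (\<Sum>n<Suc N. GG n * dd q n) - GG N * TT q N" for N
    using partial_sum[of N] by (simp add: algebra_simps)
  have l1: "(\<lambda>N. \<Sum>n<Suc N. GG n * dd q n) \<longlonglongrightarrow> (\<Sum>n. GG n * dd q n)"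
    using LIMSEQ_Suc[OF summable_LIMSEQ[OF GGdd_summable]] .
  have "(\<lambda>N. norm (GG N) * (2 / (1 - norm q))) \<longlonglongrightarrow> 0 * (2 / (1 - norm q))"
    by (intro tendsto_mult tendsto_const tendsto_norm_zero GG_tendsto)
  then have z: "(\<lambda>N. norm (GG N) * (2 / (1 - norm q))) \<longlonglongrightarrow> 0" by simp
  have bnd: "norm (GG N * TT q N) \<le> norm (GG N) * (2 / (1 - norm q))" for N
    unfolding norm_mult by (rule mult_left_mono[OF TT_bound[OF q1] norm_ge_zero])
  have l2: "(\<lambda>N. GG N * TT q N) \<longlonglongrightarrow> 0"
    by (rule Lim_null_comparison[OF always_eventually z]) (rule allI, rule bnd)
  have "(\<lambda>N. (\<Sum>n<Suc N. GG n * dd q n) - GG N * TT q N) \<longlonglongrightarrow> (\<Sum>n. GG n * dd q n) - 0"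
    by (rule tendsto_diff[OF l1 l2])
  then show ?thesis unfolding sums_def e by simp
qed

definition K0 :: complex where
  "K0 = (1 - a) * qpoch_inf q q / ((1 - a * c / q) * qpoch_inf (q * c) q)"

lemma term_identity: "GG n * dd q n = K0 * (alph q a n * LL q c n)"
proof -
  have qi: "qpoch_inf q q \<noteq> 0" by (rule qpoch_inf_q_nz[OF q1])
  have a1: "1 - a \<noteq> 0" using an[of 1] by (simp add: qpoch_def)
  have LLc: "LL q c n = w q c n * qpoch_inf (c * q ^ n) q / qpoch_inf q q"
    by (rule LL_closed[OF q1 qnz an])
  have key: "GG n * dd q n * ((1 - a * c / q) * qpoch_inf (q * c) q)
      = (1 - a) * alph q a n * w q c n * qpoch_inf (c * q ^ n) q"
  proof (cases n)
    case 0
    have "qpoch_inf c q = (1 - c) * qpoch_inf (q * c) q"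
      using qpoch_inf_split[OF q1, of c 1] by (simp add: qpoch_def mult.commute)
    then show ?thesis using 0 acq_nz acq' qnz
      by (simp add: GG_def dd_def XX_def alph_def V_def w_def)
  next
    case (Suc m)
    define x where "x = q ^ n"
    define t where "t = q ^ tri n"
    define A where "A = qpoch (q * a) q m"
    define C where "C = qpoch (q * c) q m"
    define PA where "PA = qpoch (q / a) q n"
    define PC where "PC = qpoch (q / c) q n"
    define I where "I = qpoch_inf (c * q ^ n) q"
    have x0: "x \<noteq> 0" using qnz by (simp add: x_def)
    have A0: "A \<noteq> 0" using qan by (simp add: A_def)
    have C0: "C \<noteq> 0" using qcn by (simp add: C_def)
    have ax: "1 - a * x \<noteq> 0" using qan[of n] Suc by (simp add: qpoch_Suc x_def mult_ac)
    have cx: "1 - c * x \<noteq> 0" using qcn[of n] Suc by (simp add: qpoch_Suc x_def mult_ac)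
    have QA: "qpoch (q * a) q n = A * (1 - a * x)" using Suc by (simp add: A_def x_def qpoch_Suc mult_ac)
    have QC: "qpoch (q * c) q n = C * (1 - c * x)" using Suc by (simp add: C_def x_def qpoch_Suc mult_ac)
    have Qa: "qpoch a q n = (1 - a) * A" using Suc by (simp add: A_def qpoch_Suc' mult.commute)
    have QI: "qpoch_inf (q * c) q = C * I"
      using qpoch_inf_split[OF q1, of "q * c" m] Suc by (simp add: C_def I_def mult_ac)
    have pw: "q ^ (n ^ 2) = t * t * x" unfolding t_def x_def tri2[symmetric] by (simp add: power_add mult_2)
    have n0: "n \<noteq> 0" using Suc by simp
    have dn: "dd q n = 2 * (-1) ^ n * (t * t * x)" unfolding dd_def pw using n0 by simp
    have Vn: "alph q a n = 2 * (t * (a ^ n * PA) / ((1 - a) * A))"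
      unfolding alph_def V_def Pm_qpoch[OF a0] Qa using n0 by (simp add: t_def PA_def)
    have wn: "w q c n = t * ((- c) ^ n * PC)" by (simp add: w_def Pw_qpoch[OF c0] t_def PC_def)
    have Xn: "XX n = PA * PC / (A * (1 - a * x) * (C * (1 - c * x))) * (a * c) ^ n"
      by (simp add: XX_def QA QC PA_def PC_def)
    show ?thesis
      unfolding GG_def dn Vn wn Xn QI I_def[symmetric]
      unfolding x_def[symmetric]
      by (rule key_alg[OF x0 A0 C0 ax cx a1 acq_nz])
  qed
  show ?thesis
  proof -
    define D where "D = 1 - a * c / q"
    have D0: "D \<noteq> 0" using acq_nz by (simp add: D_def)
    have "GG n * dd q n = (1 - a) * alph q a n * w q c n * qpoch_inf (c * q ^ n) q / (D * qpoch_inf (q * c) q)"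
      using key D0 qci unfolding D_def[symmetric] by (simp add: nonzero_eq_divide_eq)
    also have "\<dots> = (1 - a) * qpoch_inf q q / (D * qpoch_inf (q * c) q) *
        (alph q a n * (w q c n * qpoch_inf (c * q ^ n) q / qpoch_inf q q))"
    proof -
      define Y where "Y = qpoch_inf (q * c) q"
      define K where "K = qpoch_inf q q"
      define I where "I = qpoch_inf (c * q ^ n) q"
      define al where "al = alph q a n"
      define ww where "ww = w q c n"
      have "(1 - a) * al * ww * I / (D * Y) = (1 - a) * K / (D * Y) * (al * (ww * I / K))"
        using qi by (simp add: K_def)
      then show ?thesis by (simp add: Y_def K_def I_def al_def ww_def)
    qed
    finally show ?thesis unfolding K0_def LLc D_def .
  qed
qed

lemma RHS_term: "(qpoch (q / c) q n * qpoch (- a) q n * (- c) ^ n) / (qpoch (q ^ 2) (q ^ 2) n * qpoch a q n)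
     * q ^ (n * (n - 1) div 2) = w q c n * bet q a n"
  by (simp add: bet_closed[OF q1 qnz an] w_def Pw_qpoch[OF c0] tri_div)

lemma lhs_term: "(\<Sum>j\<in>{-int n..int n}. (-1) powi j * (1 - q ^ (2 * n + 1))
            * q powi (j ^ 2 - int n)
            * (qpoch (q / a) q n * qpoch (q / c) q n)
              / (qpoch (q * a) q n * qpoch (q * c) q n) * (a * c) ^ n) = tt n * TT q n"
  unfolding TT_def sum_distrib_left
proof (rule sum.cong[OF refl])
  fix j :: int
  have "q powi (j ^ 2 - int n) = q powi (j ^ 2) * inverse (q ^ n)"
    using qnz by (simp add: power_int_diff divide_inverse)
  then show "(-1) powi j * (1 - q ^ (2 * n + 1)) * q powi (j ^ 2 - int n)
            * (qpoch (q / a) q n * qpoch (q / c) q n)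
              / (qpoch (q * a) q n * qpoch (q * c) q n) * (a * c) ^ n
        = tt n * ((-1) powi j * q powi (j ^ 2))"
    by (simp add: tt_def XX_def mult_ac)
qed

lemma main:
  "(\<Sum>n. \<Sum>j\<in>{-int n..int n}. (-1) powi j * (1 - q ^ (2 * n + 1))
            * q powi (j ^ 2 - int n)
            * (qpoch (q / a) q n * qpoch (q / c) q n)
              / (qpoch (q * a) q n * qpoch (q * c) q n) * (a * c) ^ n)
       = (1 - a) * qpoch_inf q q / ((1 - a * c / q) * qpoch_inf (q * c) q)
         * (\<Sum>n. (qpoch (q / c) q n * qpoch (- a) q n * (- c) ^ n)
                 / (qpoch (q ^ 2) (q ^ 2) n * qpoch a q n)
                 * q ^ (n * (n - 1) div 2))"
proof -
  have "(\<Sum>n. \<Sum>j\<in>{-int n..int n}. (-1) powi j * (1 - q ^ (2 * n + 1))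
            * q powi (j ^ 2 - int n)
            * (qpoch (q / a) q n * qpoch (q / c) q n)
              / (qpoch (q * a) q n * qpoch (q * c) q n) * (a * c) ^ n)
      = (\<Sum>n. tt n * TT q n)" by (simp only: lhs_term)
  also have "\<dots> = (\<Sum>n. GG n * dd q n)" using LHS_sums by (simp add: sums_iff)
  also have "\<dots> = (\<Sum>n. K0 * (alph q a n * LL q c n))" by (simp only: term_identity)
  also have "\<dots> = K0 * (\<Sum>n. alph q a n * LL q c n)"
    by (rule suminf_mult[OF bailey_swap(1)[OF q1 qnz an]])
  also have "\<dots> = K0 * (\<Sum>n. w q c n * bet q a n)"
    by (simp only: bailey_swap(3)[OF q1 qnz an])
  also have "\<dots> = K0 * (\<Sum>n. (qpoch (q / c) q n * qpoch (- a) q n * (- c) ^ n)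
                 / (qpoch (q ^ 2) (q ^ 2) n * qpoch a q n) * q ^ (n * (n - 1) div 2))"
    by (simp only: RHS_term)
  finally show ?thesis by (simp add: K0_def)
qed

end

theorem theorem6p3:
  fixes q a c :: complex
  assumes "0 < cmod q" and "cmod q < 1" and "a \<noteq> 0" and "c \<noteq> 0"
    and "cmod (a * c) < cmod q"
    and "\<And>n. qpoch (q * a) q n \<noteq> 0"
    and "\<And>n. qpoch (q * c) q n \<noteq> 0"
    and "\<And>n. qpoch a q n \<noteq> 0"
    and "a * c \<noteq> q"
    and "qpoch_inf (q * c) q \<noteq> 0"
  shows "(\<Sum>n. \<Sum>j\<in>{-int n..int n}. (-1) powi j * (1 - q ^ (2 * n + 1))
            * q powi (j ^ 2 - int n)
            * (qpoch (q / a) q n * qpoch (q / c) q n)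
              / (qpoch (q * a) q n * qpoch (q * c) q n) * (a * c) ^ n)
       = (1 - a) * qpoch_inf q q / ((1 - a * c / q) * qpoch_inf (q * c) q)
         * (\<Sum>n. (qpoch (q / c) q n * qpoch (- a) q n * (- c) ^ n)
                 / (qpoch (q ^ 2) (q ^ 2) n * qpoch a q n)
                 * q ^ (n * (n - 1) div 2))"
  using main[OF assms] .

end
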